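(* Let $a,b\in\mathbb{R}$ and $W(x;a,b)=(1-x)^a(1+x)^b$. The function $W(x;a,b)$ has a quasi-rational antiderivative if and only if one of the following three mutually exclusive conditions holds: (A) either $a\in\mathbb{N}_0$ and $b\notin\mathbb{Z}_-$, or $b\in\mathbb{N}_0$ and $a\notin\mathbb{Z}_-$; (C) $a+b+1\in\mathbb{Z}_-$ and $a,b\notin\mathbb{Z}_-$; (H) $a+b+1\in\mathbb{Z}_-$ and $a,b\in\mathbb{Z}$ have opposite signs.
   Context: $\mathbb{Z}_-=\{-1,-2,-3,\ldots\}$. A function $\rho$ is quasi-rational if $\rho'/\rho$ is a rational function; a quasi-rational antiderivative of $W$ is a quasi-rational $\rho$ with $\rho'=W$. *)

theory Defs
  imports "HOL-Analysis.Analysis" "HOL-Computational_Algebra.Polynomial"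
begin

definition Zminus :: "real set" where
  "Zminus = {x. \<exists>n::nat. n \<ge> 1 \<and> x = - real n}"

definition W :: "real \<Rightarrow> real \<Rightarrow> real \<Rightarrow> real" where
  "W a b x = (1 - x) powr a * (1 + x) powr b"

text \<open>rho is quasi-rational on S with derivative d: rho has derivative d on S and
  rho'/rho equals a rational function p/q (q a nonzero real polynomial), written
  multiplied out as q * rho' = p * rho on S.\<close>
definition quasi_rational_on :: "real set \<Rightarrow> (real \<Rightarrow> real) \<Rightarrow> (real \<Rightarrow> real) \<Rightarrow> bool" where
  "quasi_rational_on S rho d \<longleftrightarrow>
     (\<forall>x\<in>S. (rho has_real_derivative d x) (at x)) \<and>
     (\<exists>p q :: real poly. q \<noteq> 0 \<and> (\<forall>x\<in>S. poly q x * d x = poly p x * rho x))"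

definition has_qr_antiderivative :: "real set \<Rightarrow> (real \<Rightarrow> real) \<Rightarrow> bool" where
  "has_qr_antiderivative S f \<longleftrightarrow> (\<exists>rho. quasi_rational_on S rho f)"

end

theory Submission
  imports Defs "HOL-Computational_Algebra.Polynomial_FPS" "HOL-Computational_Algebra.Polynomial_Factorial" "HOL-Computational_Algebra.Field_as_Ring"
begin


definition EQ :: "real \<Rightarrow> real \<Rightarrow> real poly \<Rightarrow> real poly \<Rightarrow> real poly" where
  "EQ a b p q = [:1,0,-1:] * (pderiv q * p - q * pderiv p) + p * q * [:b-a, -(a+b):] - [:1,0,-1:] * p^2"

lemma poly_EQ: "poly (EQ a b p q) x =
  (1 - x^2) * (poly (pderiv q) x * poly p x - poly q x * poly (pderiv p) x)
  + poly p x * poly q x * (b * (1-x) - a * (1+x)) - (1 - x^2) * (poly p x)^2"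
  by (simp add: EQ_def algebra_simps power2_eq_square)

lemma poly_zero_cofinite:
  fixes P :: "real poly"
  assumes "\<And>x. x \<in> S \<Longrightarrow> poly P x = 0" "infinite S"
  shows "P = 0"
proof (rule ccontr)
  assume "P \<noteq> 0"
  then have "finite {x. poly P x = 0}" by (rule poly_roots_finite)
  moreover have "S \<subseteq> {x. poly P x = 0}" using assms(1) by auto
  ultimately show False using assms(2) finite_subset by blast
qed

lemma poly_zero_except:
  fixes P :: "real poly"
  assumes "\<And>x. x \<noteq> c \<Longrightarrow> poly P x = 0"
  shows "P = 0"
  by (rule poly_zero_cofinite[of "UNIV - {c}"]) (use assms infinite_UNIV_char_0 in auto)

lemma EQ_coprime:
  assumes "EQ a b p q = 0" "p \<noteq> 0" "q \<noteq> 0"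
  obtains p1 q1 where "EQ a b p1 q1 = 0" "p1 \<noteq> 0" "q1 \<noteq> 0" "coprime p1 q1"
proof -
  have g0: "gcd p q \<noteq> 0" using assms by auto
  from gcd_coprime_exists[OF g0] obtain p1 q1 where
    pq: "p = p1 * gcd p q" "q = q1 * gcd p q" "coprime p1 q1" by blast
  define g where "g = gcd p q"
  have "EQ a b p q = g^2 * EQ a b p1 q1"
    using pq unfolding g_def[symmetric]
    by (simp add: EQ_def pderiv_mult power2_eq_square algebra_simps)
  then have "EQ a b p1 q1 = 0" using assms(1,2) g0 g_def by simp
  moreover have "p1 \<noteq> 0" "q1 \<noteq> 0" using pq assms by auto
  ultimately show ?thesis using that pq by blast
qed

lemma EQ_reflect:
  assumes "EQ a b p q = 0"
  shows "EQ b a (p \<circ>\<^sub>p [:0,-1:]) (- (q \<circ>\<^sub>p [:0,-1:])) = 0"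
proof -
  have "poly (EQ b a (p \<circ>\<^sub>p [:0,-1:]) (- (q \<circ>\<^sub>p [:0,-1:]))) x = poly (EQ a b p q) (-x)" for x
    by (simp add: poly_EQ pderiv_pcompose poly_pcompose pderiv_minus pderiv_pCons algebra_simps power2_eq_square)
  then show ?thesis using assms by (intro poly_zero_cofinite[of UNIV]) (auto simp: infinite_UNIV_char_0)
qed



lemma EQ_at_1:
  assumes E: "EQ a b p q = 0" and p0: "p \<noteq> 0"
    and nb: "\<not> (poly p 1 = 0 \<and> poly q 1 = 0)" and aN: "a \<notin> \<nat>"
  shows "poly p 1 \<noteq> 0 \<and> poly q 1 = 0"
proof (cases "poly p 1 = 0")
  case True
  with nb have q1: "poly q 1 \<noteq> 0" by auto
  obtain p1 where pd: "p = [:-1,1:] ^ order 1 p * p1" and nd: "\<not> [:-1,1:] dvd p1"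
    using order_decomp[OF p0, of 1] by auto
  have p11: "poly p1 1 \<noteq> 0" using nd by (simp add: poly_eq_0_iff_dvd)
  have "order 1 p \<noteq> 0" using True p0 by (simp add: order_root)
  then obtain j where j: "order 1 p = Suc j" by (cases "order 1 p") auto
  define F where "F = - [:1,1:] * ([:-1,1:] * (pderiv q * p1 - q * pderiv p1) - smult (of_nat (Suc j)) (q * p1))
     + p1 * q * [:b-a, -(a+b):] + [:1,1:] * [:-1,1:] ^ (j+2) * p1^2"
  have pp: "p = [:-1,1:] ^ Suc j * p1" using pd j by simp
  have pv: "poly p x = (x-1)^Suc j * poly p1 x" for x unfolding pp by (simp add: algebra_simps)
  have dp: "poly (pderiv p) x = real (Suc j) * (x-1)^j * poly p1 x + (x-1)^Suc j * poly (pderiv p1) x" for x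
  proof -
    have d1: "pderiv [:-1,1::real:] = 1" by (simp add: pderiv_pCons)
    have "pderiv p = smult (of_nat (Suc j)) ([:-1,1:] ^ j) * p1 + [:-1,1:] ^ Suc j * pderiv p1"
      unfolding pp by (simp only: pderiv_mult pderiv_power_Suc d1 mult_1_right mult.commute add.commute)
    then show ?thesis by (simp del: power_Suc add: algebra_simps)
  qed
  have hF: "poly (EQ a b p q) x = (x - 1) ^ Suc j * poly F x" for x
    unfolding poly_EQ pv dp F_def
    by (simp add: algebra_simps power2_eq_square)
  have "poly F x = 0" if "x \<noteq> 1" for x
  proof -
    have "(x-1)^Suc j * poly F x = 0" using hF[of x] E by simp
    moreover have "(x-1)^Suc j \<noteq> 0" using that by simp
    ultimately show ?thesis by simp
  qed
  then have "F = 0" by (rule poly_zero_except)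
  then have "poly F 1 = 0" by simp
  then have "(2 * real (Suc j) - 2 * a) * (poly q 1 * poly p1 1) = 0"
    unfolding F_def by (simp add: algebra_simps)
  then have "a = real (Suc j)" using q1 p11 by simp
  then show ?thesis using aN by (metis of_nat_in_Nats)
next
  case False
  show ?thesis
  proof (rule ccontr)
    assume "\<not> ?thesis"
    then have q1: "poly q 1 \<noteq> 0" using False by auto
    have "poly (EQ a b p q) 1 = 0" using E by simp
    then have "a * (poly p 1 * poly q 1) = 0" unfolding poly_EQ by (simp add: algebra_simps)
    then have "a = 0" using q1 False by simp
    then show False using aN by simp
  qed
qed



lemma coeff_quad_mult: "coeff ([:u,v,w:] * f) (Suc (Suc n)) = u * coeff f (Suc (Suc n)) + v * coeff f (Suc n) + w * coeff f n"
  by (simp add: algebra_simps)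

lemma coeff_mult_lin: "coeff (f * [:u,v:]) (Suc n) = u * coeff f (Suc n) + v * coeff f n"
  by (simp add: mult.commute[of f] algebra_simps)

lemma EQ_p_const:
  assumes E: "EQ a b p q = 0" and p0: "p \<noteq> 0" and cp: "coprime p q"
    and p1: "poly p 1 \<noteq> 0" and pm1: "poly p (-1) \<noteq> 0"
  shows "degree p = 0"
proof -
  have "[:1,0,-1:] * q * pderiv p = p * ([:1,0,-1:] * pderiv q + q * [:b-a,-(a+b):] - [:1,0,-1:] * p)"
    using E unfolding EQ_def by (simp add: algebra_simps power2_eq_square)
  then have dv: "p dvd ([:1,0,-1:] * q) * pderiv p" by (metis dvd_triv_left)
  have fac: "[:1,0,-1::real:] = [:-1,1:] * [:-1,-1:]" by simp
  have c1: "coprime p [:-1,1:]"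
  proof -
    have "\<not> [:-1,1:] dvd p" using p1 by (simp add: poly_eq_0_iff_dvd)
    then show ?thesis using prime_elem_imp_coprime[OF prime_elem_linear_field_poly[of 1 "-1"]]
      by (simp add: coprime_commute)
  qed
  have c2: "coprime p [:-1,-1:]"
  proof -
    have "\<not> [:-1,-1:] dvd p"
    proof
      assume "[:-1,-1:] dvd p"
      then obtain k where "p = [:-1,-1:] * k" by (auto elim: dvdE)
      then have "poly p (-1) = 0" by simp
      then show False using pm1 by simp
    qed
    then show ?thesis using prime_elem_imp_coprime[OF prime_elem_linear_field_poly[of "-1" "-1"]]
      by (simp add: coprime_commute)
  qed
  have "coprime p ([:1,0,-1:] * q)" using c1 c2 cp unfolding fac coprime_mult_right_iff by simp
  then have "p dvd pderiv p" using dv coprime_dvd_mult_right_iff by blast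
  then show "degree p = 0"
  proof (cases "pderiv p = 0")
    case True then show ?thesis by (simp add: pderiv_eq_0_iff)
  next
    case False
    assume "p dvd pderiv p"
    then have "degree p \<le> degree (pderiv p)" using False dvd_imp_degree_le by blast
    then show ?thesis by (simp add: degree_pderiv)
  qed
qed

lemma EQ_const_p:
  assumes E: "EQ a b [:c:] q = 0" and c0: "c \<noteq> 0" and dq: "degree q \<ge> 2"
  shows "a + b = - real (degree q)"
proof -
  have "poly (EQ a b [:c:] q) x = c * poly ([:1,0,-1:] * pderiv q + q * [:b-a,-(a+b):] - smult c [:1,0,-1:]) x" for x
    by (simp add: poly_EQ algebra_simps power2_eq_square)
  then have E2: "[:1,0,-1:] * pderiv q + q * [:b-a,-(a+b):] - smult c [:1,0,-1:] = 0" using c0 E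
    by (intro poly_zero_cofinite[of UNIV]) (auto simp: infinite_UNIV_char_0)
  obtain m where m: "degree q = Suc (Suc m)" using dq by (metis add_2_eq_Suc le_Suc_ex)
  have "coeff ([:1,0,-1:] * pderiv q + q * [:b-a,-(a+b):] - smult c [:1,0,-1:]) (Suc (Suc (Suc m))) = 0"
    using E2 by simp
  also have "coeff ([:1,0,-1:] * pderiv q + q * [:b-a,-(a+b):] - smult c [:1,0,-1:]) (Suc (Suc (Suc m)))
     = - real (Suc (Suc m)) * coeff q (Suc (Suc m)) - (a+b) * coeff q (Suc (Suc m))"
  proof -
    have z1: "coeff q (Suc (Suc (Suc m))) = 0" "coeff q (Suc (Suc (Suc (Suc m)))) = 0"
      using m by (simp_all add: coeff_eq_0)
    show ?thesis
      unfolding coeff_diff coeff_add coeff_quad_mult coeff_mult_lin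
      by (simp add: coeff_pderiv z1 algebra_simps)
  qed
  finally have "(real (Suc (Suc m)) + (a+b)) * lead_coeff q = 0" using m by (simp add: algebra_simps)
  moreover have "lead_coeff q \<noteq> 0" using dq by auto
  ultimately show ?thesis using m by simp
qed



definition Efps :: "real \<Rightarrow> real fps" where
  "Efps a = Abs_fps (\<lambda>n. \<Prod>k<n. (of_nat k - a) / (2 * (of_nat k + 1)))"

lemma Efps_Suc: "fps_nth (Efps a) (Suc n) = fps_nth (Efps a) n * ((of_nat n - a) / (2 * (of_nat n + 1)))"
  by (simp add: Efps_def)

lemma Efps_deriv: "fps_deriv (Efps a) * fps_of_poly [:2,-1:] = - fps_const a * Efps a"
proof (rule fps_ext)
  fix n
  have U: "fps_of_poly [:2,-1::real:] = 2 - fps_X"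
    by (simp add: fps_of_poly_simps fps_const_neg[symmetric] algebra_simps)
  have "fps_nth (fps_deriv (Efps a) * fps_of_poly [:2,-1:]) n
      = 2 * fps_nth (fps_deriv (Efps a)) n - fps_nth (fps_X * fps_deriv (Efps a)) n"
    unfolding U by (simp add: algebra_simps numeral_fps_const)
  also have "fps_nth (fps_X * fps_deriv (Efps a)) n = of_nat n * fps_nth (Efps a) n"
    by (cases n) (simp_all add: fps_X_mult_nth)
  also have "2 * fps_nth (fps_deriv (Efps a)) n - of_nat n * fps_nth (Efps a) n = - a * fps_nth (Efps a) n"
    by (simp add: Efps_Suc field_simps)
  finally show "fps_nth (fps_deriv (Efps a) * fps_of_poly [:2,-1:]) n = fps_nth (- fps_const a * Efps a) n"
    by simp
qed


lemma EQ_residue: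
  assumes E: "EQ a b p q = 0" and pm1: "poly p (-1) \<noteq> 0" and bl: "b = - real l" and l1: "l \<ge> 1"
  shows "\<exists>k. a = real k \<and> k + 2 \<le> l"
proof -
  define P where "P = p \<circ>\<^sub>p [:-1,1:]"
  define Q where "Q = q \<circ>\<^sub>p [:-1,1:]"
  define Z where "Z = [:0,1:] * [:2,-1:] * (pderiv Q * P - Q * pderiv P) + P * Q * [:2*b, -(a+b):]
      - [:0,1:] * [:2,-1:] * P^2"
  have "poly Z t = poly (EQ a b p q) (t - 1)" for t
    unfolding Z_def P_def Q_def poly_EQ
    by (simp add: pderiv_pcompose poly_pcompose pderiv_pCons algebra_simps power2_eq_square)
  then have Z0: "Z = 0" using E by (intro poly_zero_cofinite[of UNIV]) (auto simp: infinite_UNIV_char_0)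
  define Pf where "Pf = fps_of_poly P"
  define Qf where "Qf = fps_of_poly Q"
  define U where "U = fps_of_poly [:2,-1::real:]"
  define V where "V = fps_of_poly [:2*b, -(a+b):]"
  define X where "X = fps_of_poly [:0,1::real:]"
  have XX: "X = fps_X" unfolding X_def by simp
  define Ef where "Ef = Efps a"
  have h1: "X * U * (fps_deriv Qf * Pf - Qf * fps_deriv Pf) + Pf * Qf * V - X * U * Pf^2 = 0"
  proof -
    have "fps_of_poly Z = 0" using Z0 by simp
    then show ?thesis unfolding Z_def Pf_def Qf_def U_def V_def X_def
      by (simp only: fps_of_poly_mult fps_of_poly_add fps_of_poly_diff fps_of_poly_pderiv fps_of_poly_power fps_of_poly_0)
  qed
  have h5: "V = fps_const b * U - fps_const a * X"
  proof -
    have "[:2*b, -(a+b):] = smult b [:2,-1:] - smult a [:0,1:]" by simp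
    then show ?thesis unfolding V_def U_def X_def by (simp only: fps_of_poly_diff fps_of_poly_smult)
  qed
  have h2: "fps_deriv Ef * U = - fps_const a * Ef" unfolding Ef_def U_def by (rule Efps_deriv)
  have P00: "fps_nth Pf 0 \<noteq> 0" using pm1 unfolding Pf_def P_def
    by (simp add: poly_0_coeff_0[symmetric] poly_pcompose)
  define G where "G = Ef * Qf * inverse Pf"
  have h3: "G * Pf = Ef * Qf" unfolding G_def using inverse_mult_eq_1[OF P00]
    by (simp add: algebra_simps)
  have h4: "fps_deriv G * Pf + G * fps_deriv Pf = fps_deriv Ef * Qf + Ef * fps_deriv Qf"
    using arg_cong[OF h3, of fps_deriv] by (simp add: fps_deriv_mult add.commute)
  define K where "K = X * fps_deriv G + fps_const b * G - X * Ef"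
  have "U * Pf^2 * K = 0"
    unfolding K_def using h1 h2 h3 h4 h5 by algebra
  moreover have "U \<noteq> 0" unfolding U_def by (metis fps_of_poly_eq_iff fps_of_poly_simps(1) pCons_eq_0_iff zero_neq_neg_one)
  moreover have "Pf \<noteq> 0" using P00 by auto
  ultimately have K0: "K = 0" by simp
  obtain l0 where l0: "l = Suc l0" using l1 by (cases l) auto
  have "fps_nth K l = 0" using K0 by simp
  then have "fps_nth Ef l0 = 0" unfolding K_def XX using bl l0
    by (simp add: fps_X_mult_nth algebra_simps)
  then have "(\<Prod>k<l0. (of_nat k - a) / (2 * (of_nat k + 1))) = 0" unfolding Ef_def Efps_def by simp
  then obtain k where "k < l0" "(of_nat k - a) / (2 * (of_nat k + 1)) = 0" by auto
  then have "a = real k" "k + 2 \<le> l" using l0 by (auto simp: field_simps)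
  then show ?thesis by blast
qed



lemma W_pos: "x \<in> {-1<..<1} \<Longrightarrow> W a b x > 0"
  by (auto simp: W_def)

lemma W_deriv:
  assumes "x \<in> {-1<..<1}"
  shows "(W a b has_real_derivative W a b x * (b / (1 + x) - a / (1 - x))) (at x)"
proof -
  have x: "1 - x > 0" "1 + x > 0" using assms by auto
  have g1: "((\<lambda>x. 1 - x) has_real_derivative -1) (at x)" by (auto intro!: derivative_eq_intros)
  have g2: "((\<lambda>x. 1 + x) has_real_derivative 1) (at x)" by (auto intro!: derivative_eq_intros)
  have ca: "((\<lambda>x. a) has_real_derivative 0) (at x)" by simp
  have cb: "((\<lambda>x. b) has_real_derivative 0) (at x)" by simp
  show ?thesis unfolding W_def
    by (rule DERIV_cong[OF DERIV_mult[OF DERIV_powr[OF g1 _ ca] DERIV_powr[OF g2 _ cb]]])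
       (use x in \<open>auto simp: algebra_simps\<close>)
qed

lemma no_zero_antideriv:
  assumes "\<forall>x\<in>{-1<..<1}. (rho has_real_derivative W a b x) (at x)"
    and "\<forall>x\<in>{-1<..<1}. rho x = 0"
  shows False
proof -
  have d: "(rho has_real_derivative W a b 0) (at 0)" using assms(1) by auto
  have "((\<lambda>x. 0) has_real_derivative 0) (at 0)" by simp
  then have "(rho has_real_derivative 0) (at 0)"
    by (rule has_field_derivative_transform_within_open[of _ _ _ "{-1<..<1}"]) (use assms(2) in auto)
  then have "W a b 0 = 0" using d DERIV_unique by blast
  then show False using W_pos[of 0 a b] by simp
qed

lemma qr_symm:
  assumes "has_qr_antiderivative {-1<..<1} (W a b)"
  shows "has_qr_antiderivative {-1<..<1} (W b a)"
proof -
  obtain rho p q where d: "\<forall>x\<in>{-1<..<1}. (rho has_real_derivative W a b x) (at x)"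
    and q0: "q \<noteq> 0" and e: "\<forall>x\<in>{-1<..<1}. poly q x * W a b x = poly p x * rho x"
    using assms unfolding has_qr_antiderivative_def quasi_rational_on_def by blast
  define sig where "sig x = - rho (-x)" for x
  have "(sig has_real_derivative W b a x) (at x)" if "x \<in> {-1<..<1}" for x
  proof -
    have "-x \<in> {-1<..<1}" using that by auto
    then have "(rho has_real_derivative W a b (-x)) (at (-x))" using d by auto
    then have "((\<lambda>z. rho (-z)) has_real_derivative W a b (-x) * (-1)) (at x)"
      by (rule DERIV_chain2) (auto intro!: derivative_eq_intros)
    then have "((\<lambda>x. - rho (-x)) has_real_derivative - (W a b (-x) * (-1))) (at x)"
      by (rule DERIV_minus)
    then show ?thesis unfolding sig_def[abs_def] W_def by (simp add: mult.commute)
  qed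
  moreover have "pcompose q [:0,-1:] \<noteq> 0" using q0 pcompose_eq_0 by fastforce
  moreover have "poly (pcompose q [:0,-1:]) x * W b a x = poly (- pcompose p [:0,-1:]) x * sig x"
    if "x \<in> {-1<..<1}" for x
  proof -
    have "-x \<in> {-1<..<1}" using that by auto
    then have "poly q (-x) * W a b (-x) = poly p (-x) * rho (-x)" using e by auto
    moreover have "W a b (-x) = W b a x" by (simp add: W_def mult.commute)
    ultimately show ?thesis by (simp add: poly_pcompose sig_def)
  qed
  ultimately show ?thesis unfolding has_qr_antiderivative_def quasi_rational_on_def by blast
qed

lemma aux_ring: "((Q' * w + Q * (w * B)) * P - Q * w * P') * ((1-x)*(1+x)) =
   w * ((1 - x^2) * (Q' * P - Q * P') + P * Q * (B * ((1-x)*(1+x))))" for Q' w Q B P P' x :: real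
  by (simp add: algebra_simps power2_eq_square)

lemma qr_EQ:
  assumes "has_qr_antiderivative {-1<..<1} (W a b)"
  shows "\<exists>p q. p \<noteq> 0 \<and> q \<noteq> 0 \<and> EQ a b p q = 0"
proof -
  define S where "S = {-1<..<1::real}"
  obtain rho p q where d: "\<forall>x\<in>S. (rho has_real_derivative W a b x) (at x)"
    and q0: "q \<noteq> 0" and e: "\<forall>x\<in>S. poly q x * W a b x = poly p x * rho x"
    using assms unfolding has_qr_antiderivative_def quasi_rational_on_def S_def by blast
  have infS: "infinite S" unfolding S_def by simp
  have p0: "p \<noteq> 0"
  proof
    assume "p = 0"
    then have "poly q x = 0" if "x \<in> S" for x using e that W_pos[of x a b] unfolding S_def by auto
    then have "q = 0" using infS by (rule poly_zero_cofinite)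
    then show False using q0 by simp
  qed
  define U where "U = S - {x. poly p x = 0}"
  have finr: "finite {x. poly p x = 0}" using p0 by (rule poly_roots_finite)
  have oU: "open U" unfolding U_def S_def using finr by (intro open_Diff finite_imp_closed) auto
  have infU: "infinite U" unfolding U_def using infS finr by (rule Diff_infinite_finite[rotated])
  have "poly (EQ a b p q) x = 0" if xU: "x \<in> U" for x
  proof -
    have xS: "x \<in> S" and px: "poly p x \<noteq> 0" using xU unfolding U_def by auto
    have x: "1 - x > 0" "1 + x > 0" using xS unfolding S_def by auto
    define f where "f y = poly q y * W a b y / poly p y" for y
    have "(f has_real_derivative
       ((poly (pderiv q) x * W a b x + poly q x * (W a b x * (b / (1 + x) - a / (1 - x)))) * poly p x
         - poly q x * W a b x * poly (pderiv p) x) / (poly p x * poly p x)) (at x)"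
      unfolding f_def
      by (rule DERIV_cong[OF DERIV_divide[OF DERIV_mult[OF poly_DERIV W_deriv[of x a b]] poly_DERIV]])
         (use xS px S_def in \<open>auto simp: algebra_simps\<close>)
    then have "(rho has_real_derivative
       ((poly (pderiv q) x * W a b x + poly q x * (W a b x * (b / (1 + x) - a / (1 - x)))) * poly p x
         - poly q x * W a b x * poly (pderiv p) x) / (poly p x * poly p x)) (at x)"
    proof (rule has_field_derivative_transform_within_open[OF _ oU xU])
      fix y assume "y \<in> U"
      then have "y \<in> S" "poly p y \<noteq> 0" unfolding U_def by auto
      then show "f y = rho y" unfolding f_def using e by (auto simp: field_simps)
    qed
    then have "W a b x = ((poly (pderiv q) x * W a b x + poly q x * (W a b x * (b / (1 + x) - a / (1 - x)))) * poly p x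
         - poly q x * W a b x * poly (pderiv p) x) / (poly p x * poly p x)"
      using d xS DERIV_unique by blast
    then have eqW0: "W a b x * (poly p x * poly p x) = (poly (pderiv q) x * W a b x + poly q x * (W a b x * (b / (1 + x) - a / (1 - x)))) * poly p x
         - poly q x * W a b x * poly (pderiv p) x"
      using px by (simp add: field_simps)
    define NN where "NN = (poly (pderiv q) x * W a b x + poly q x * (W a b x * (b / (1 + x) - a / (1 - x)))) * poly p x
         - poly q x * W a b x * poly (pderiv p) x"
    have eqW: "W a b x * (poly p x * poly p x) = NN" using eqW0 unfolding NN_def .
    have x1: "1 - x \<noteq> 0" "1 + x \<noteq> 0" using x by auto
    have hb: "b / (1 + x) * ((1-x)*(1+x)) = b * (1-x)" "a / (1 - x) * ((1-x)*(1+x)) = a * (1+x)"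
      using x1 by (simp_all add: field_simps)
    have hB: "(b / (1 + x) - a / (1 - x)) * ((1-x)*(1+x)) = b * (1-x) - a * (1+x)"
      using hb by (simp add: left_diff_distrib)
    have n1: "NN * ((1-x)*(1+x)) =
       W a b x * ((1 - x^2) * (poly (pderiv q) x * poly p x - poly q x * poly (pderiv p) x)
      + poly p x * poly q x * (b * (1-x) - a * (1+x)))"
      unfolding hB[symmetric] NN_def by (rule aux_ring)
    have "W a b x * ((1 - x^2) * (poly (pderiv q) x * poly p x - poly q x * poly (pderiv p) x)
      + poly p x * poly q x * (b * (1-x) - a * (1+x)) - (1 - x^2) * (poly p x)^2) = 0"
      using n1 unfolding eqW[symmetric] by (simp add: algebra_simps power2_eq_square)
    then show ?thesis using W_pos[of x a b] xS unfolding S_def poly_EQ by simp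
  qed
  then have "EQ a b p q = 0" using infU by (rule poly_zero_cofinite)
  then show ?thesis using p0 q0 by blast
qed



lemma powr_shift: "t > 0 \<Longrightarrow> t powr (b + real k + 1) = t powr b * t ^ k * t"
  for t b :: real
  by (simp add: powr_add powr_realpow)

lemma aux2: "B \<noteq> 0 \<Longrightarrow> t \<noteq> 0 \<Longrightarrow> c / B * ((P * K * t) * (B / t)) = P * (c * K)" for B t c P K :: real
  by (simp add: field_simps)

lemma caseA:
  assumes bZ: "b \<notin> Zminus"
  shows "has_qr_antiderivative {-1<..<1} (W (real n) b)"
proof -
  define c where "c k = real (n choose k) * 2 ^ (n - k) * (-1) ^ k" for k
  have bk: "b + real k + 1 \<noteq> 0" for k
  proof
    assume "b + real k + 1 = 0"
    then have "b = - real (Suc k)" by simp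
    moreover have "b \<in> Zminus" unfolding Zminus_def using \<open>b = - real (Suc k)\<close>
      by (intro CollectI exI[of _ "Suc k"]) auto
    ultimately show False using bZ by simp
  qed
  define rho where "rho x = (\<Sum>k\<le>n. c k / (b + real k + 1) * (1 + x) powr (b + real k + 1))" for x
  define P where "P = (\<Sum>k\<le>n. smult (c k / (b + real k + 1)) ([:1,1:] ^ k))"
  define q where "q = [:1,1:] * P"
  define p where "p = [:1,-1::real:] ^ n"
  have binom: "(\<Sum>k\<le>n. c k * t ^ k) = (2 - t) ^ n" for t :: real
  proof -
    have "(2 - t) ^ n = (-t + 2) ^ n" by simp
    also have "\<dots> = (\<Sum>k\<le>n. real (n choose k) * (-t) ^ k * 2 ^ (n - k))" by (rule binomial_ring)
    also have "\<dots> = (\<Sum>k\<le>n. c k * t ^ k)"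
      unfolding c_def by (intro sum.cong refl) (subst power_minus, simp only: mult_ac)
    finally show ?thesis by simp
  qed
  have rho_eq: "rho x = (1 + x) powr b * poly q x" if "x \<in> {-1<..<1}" for x
  proof -
    have t: "1 + x > 0" using that by auto
    have "rho x = (\<Sum>k\<le>n. (1 + x) powr b * (1 + x) * (c k / (b + real k + 1) * (1 + x) ^ k))"
      unfolding rho_def by (intro sum.cong refl) (subst powr_shift[OF t], simp add: algebra_simps add_divide_distrib)
    also have "\<dots> = (1 + x) powr b * ((1 + x) * (\<Sum>k\<le>n. c k / (b + real k + 1) * (1 + x) ^ k))"
      by (simp only: sum_distrib_left mult.assoc)
    also have "(1 + x) * (\<Sum>k\<le>n. c k / (b + real k + 1) * (1 + x) ^ k) = poly q x"
      unfolding q_def P_def by (simp add: poly_sum distrib_right)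
    finally show ?thesis .
  qed
  have der: "(rho has_real_derivative W (real n) b x) (at x)" if "x \<in> {-1<..<1}" for x
  proof -
    have t: "1 + x > 0" and s: "1 - x > 0" using that by auto
    have g2: "((\<lambda>x. 1 + x) has_real_derivative 1) (at x)" by (auto intro!: derivative_eq_intros)
    have "(rho has_real_derivative (\<Sum>k\<le>n. c k / (b + real k + 1) *
        ((1 + x) powr (b + real k + 1) * (0 * ln (1 + x) + 1 * (b + real k + 1) / (1 + x))))) (at x)"
      unfolding rho_def[abs_def]
      by (intro DERIV_sum DERIV_cmult DERIV_powr[OF g2]) (use t in auto)
    also have "(\<Sum>k\<le>n. c k / (b + real k + 1) *
        ((1 + x) powr (b + real k + 1) * (0 * ln (1 + x) + 1 * (b + real k + 1) / (1 + x))))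
        = (\<Sum>k\<le>n. (1 + x) powr b * (c k * (1 + x) ^ k))"
    proof (intro sum.cong refl)
      fix k assume "k \<in> {..n}"
      have "c k / (b + real k + 1) * ((1 + x) powr (b + real k + 1) * (0 * ln (1 + x) + 1 * (b + real k + 1) / (1 + x)))
         = c k / (b + real k + 1) * (((1 + x) powr b * (1 + x) ^ k * (1 + x)) * ((b + real k + 1) / (1 + x)))"
        by (subst powr_shift[OF t]) simp
      also have "\<dots> = (1 + x) powr b * (c k * (1 + x) ^ k)"
        using bk[of k] t by (intro aux2) auto
      finally show "c k / (b + real k + 1) * ((1 + x) powr (b + real k + 1) * (0 * ln (1 + x) + 1 * (b + real k + 1) / (1 + x)))
         = (1 + x) powr b * (c k * (1 + x) ^ k)" .
    qed
    also have "\<dots> = (1 + x) powr b * (1 - x) ^ n"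
      using binom[of "1 + x"] by (simp add: sum_distrib_left[symmetric])
    also have "\<dots> = W (real n) b x" unfolding W_def using s by (simp add: powr_realpow)
    finally show ?thesis .
  qed
  have q0: "q \<noteq> 0"
  proof
    assume "q = 0"
    then have "\<forall>x\<in>{-1<..<1}. rho x = 0" using rho_eq by simp
    then show False using der no_zero_antideriv by blast
  qed
  have "poly q x * W (real n) b x = poly p x * rho x" if "x \<in> {-1<..<1}" for x
  proof -
    have s: "1 - x > 0" using that by auto
    show ?thesis unfolding rho_eq[OF that] W_def p_def using s
      by (simp add: powr_realpow algebra_simps)
  qed
  then show ?thesis unfolding has_qr_antiderivative_def quasi_rational_on_def
    using der q0 by blast
qed



lemma term_eq:
  fixes s t a b pc0 pc1 :: real
  assumes s: "s > 0" and t: "t > 0" and st: "s + t = 2" and ab: "a + b + 1 = - real n"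
    and pc: "2 * (b + real k + 2) * pc1 = pc0 * (real k + 1 - real n)"
  shows "pc0 * ((s powr (a+1) * (0 * ln s + - 1 * (a+1) / s)) * t powr (b+1+real k)
            + (t powr (b+1+real k) * (0 * ln t + 1 * (b+1+real k) / t)) * s powr (a+1))
   = s powr a * t powr b * (2*(b+real k+1)*pc0*t^k - 2*(b+real (Suc k)+1)*pc1*t^(Suc k))"
proof -
  have e1: "s powr (a+1) = s powr a * s" using s by (simp add: powr_add)
  have e2: "t powr (b+1+real k) = t powr b * t * t^k" using t by (simp add: powr_add powr_realpow)
  define S where "S = s powr a"
  define T where "T = t powr b"
  have "pc0 * ((s powr (a+1) * (0 * ln s + - 1 * (a+1) / s)) * t powr (b+1+real k)
            + (t powr (b+1+real k) * (0 * ln t + 1 * (b+1+real k) / t)) * s powr (a+1))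
      = S * T * t^k * pc0 * (-(a+1) * t + (b+1+real k) * s)"
    unfolding e1 e2 S_def[symmetric] T_def[symmetric] using s t by (simp add: field_simps)
  also have "\<dots> = S * T * t^k * (2*(b+real k+1)*pc0 - pc0 * (real k + 1 - real n) * t)"
  proof -
    have s2: "s = 2 - t" and a1: "a = - real n - b - 1" using st ab by linarith+
    have X: "-(a+1) * t + (b+1+real k) * s = 2*(b+real k+1) - (real k + 1 - real n) * t"
      unfolding s2 a1 by (simp add: algebra_simps)
    show ?thesis by (subst X) (simp add: algebra_simps)
  qed
  also have "\<dots> = S * T * (2*(b+real k+1)*pc0*t^k - (pc0 * (real k + 1 - real n))*t^(Suc k))"
    by (simp add: algebra_simps)
  also have "\<dots> = S * T * (2*(b+real k+1)*pc0*t^k - 2*(b+real (Suc k)+1)*pc1*t^(Suc k))"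
  proof -
    have pc': "2*(b+real (Suc k)+1)*pc1 = pc0 * (real k + 1 - real n)" using pc by (simp add: algebra_simps)
    show ?thesis by (simp only: pc')
  qed
  finally show ?thesis unfolding S_def T_def .
qed


lemma caseCH:
  assumes ab: "a + b + 1 = - real n" and n1: "n \<ge> 1" and bk: "\<forall>k<n. b + real k + 1 \<noteq> 0"
  shows "has_qr_antiderivative {-1<..<1} (W a b)"
proof -
  define pc where "pc k = (\<Prod>j<k. (real j + 1 - real n) / (2 * (b + real j + 2))) / (2 * (b + 1))" for k
  have pc_Suc: "pc (Suc k) = pc k * ((real k + 1 - real n) / (2 * (b + real k + 2)))" for k
    unfolding pc_def by (simp add: field_simps)
  have pc_rel: "2 * (b + real k + 2) * pc (Suc k) = pc k * (real k + 1 - real n)" if "k < n" for k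
  proof (cases "Suc k < n")
    case True
    then have "b + real (Suc k) + 1 \<noteq> 0" using bk by blast
    then have "b + real k + 2 \<noteq> 0" by (simp add: algebra_simps)
    then show ?thesis unfolding pc_Suc by (simp add: field_simps)
  next
    case False
    then have "Suc k = n" using that by simp
    then have "real k + 1 - real n = 0" by simp
    then show ?thesis unfolding pc_Suc by simp
  qed
  have pcn: "pc n = 0"
  proof -
    obtain m where m: "n = Suc m" using n1 by (cases n) auto
    show ?thesis unfolding m pc_Suc by (simp add: m)
  qed
  have b1: "b + 1 \<noteq> 0" using bk n1 by force
  have pc0: "2 * (b + 1) * pc 0 = 1" unfolding pc_def using b1 by simp
  define rho where "rho x = (\<Sum>k<n. pc k * ((1 - x) powr (a+1) * (1 + x) powr (b + 1 + real k)))" for x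
  define P where "P = (\<Sum>k<n. smult (pc k) ([:1,1:] ^ k))"
  define q where "q = [:1,0,-1:] * P"
  have rho_eq: "rho x = poly q x * W a b x" if "x \<in> {-1<..<1}" for x
  proof -
    have t: "1 + x > 0" and s: "1 - x > 0" using that by auto
    have e1: "(1 - x) powr (a+1) = (1 - x) powr a * (1 - x)" using s by (simp add: powr_add)
    have e2: "(1 + x) powr (b+1+real k) = (1 + x) powr b * (1 + x) * (1 + x)^k" for k
      using t by (simp add: powr_add powr_realpow)
    have "rho x = (\<Sum>k<n. W a b x * ((1 - x) * (1 + x)) * (pc k * (1 + x) ^ k))"
      unfolding rho_def W_def e1 e2 by (intro sum.cong refl) (simp only: mult_ac)
    also have "\<dots> = W a b x * ((1 - x) * (1 + x)) * (\<Sum>k<n. pc k * (1 + x) ^ k)"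
      by (simp only: sum_distrib_left)
    also have "\<dots> = W a b x * ((1 - x) * (1 + x) * (\<Sum>k<n. pc k * (1 + x) ^ k))"
      by (simp only: mult.assoc)
    also have "(1 - x) * (1 + x) * (\<Sum>k<n. pc k * (1 + x) ^ k) = poly q x"
      unfolding q_def P_def by (simp add: poly_sum algebra_simps)
    finally show ?thesis by (simp only: mult.commute)
  qed
  have der: "(rho has_real_derivative W a b x) (at x)" if "x \<in> {-1<..<1}" for x
  proof -
    have t: "1 + x > 0" and s: "1 - x > 0" using that by auto
    have g1: "((\<lambda>x. 1 - x) has_real_derivative -1) (at x)" by (auto intro!: derivative_eq_intros)
    have g2: "((\<lambda>x. 1 + x) has_real_derivative 1) (at x)" by (auto intro!: derivative_eq_intros)
    have ca: "((\<lambda>x. a + 1) has_real_derivative 0) (at x)" by simp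
    have cb: "((\<lambda>x. b + 1 + real k) has_real_derivative 0) (at x)" for k by simp
    define h where "h k = 2 * (b + real k + 1) * pc k * (1 + x) ^ k" for k
    have "(rho has_real_derivative (\<Sum>k<n. W a b x * (h k - h (Suc k)))) (at x)"
      unfolding rho_def[abs_def]
    proof (intro DERIV_sum)
      fix k assume k: "k \<in> {..<n}"
      have "2 * (b + real k + 2) * pc (Suc k) = pc k * (real k + 1 - real n)" using pc_rel k by simp
      from term_eq[OF s t _ ab this]
      have te: "pc k * (((1 - x) powr (a+1) * (0 * ln (1 - x) + - 1 * (a+1) / (1 - x))) * (1 + x) powr (b+1+real k)
            + ((1 + x) powr (b+1+real k) * (0 * ln (1 + x) + 1 * (b+1+real k) / (1 + x))) * (1 - x) powr (a+1))
          = W a b x * (h k - h (Suc k))" unfolding W_def h_def by simp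
      show "((\<lambda>x. pc k * ((1 - x) powr (a+1) * (1 + x) powr (b + 1 + real k))) has_real_derivative
          W a b x * (h k - h (Suc k))) (at x)"
        by (rule DERIV_cong[OF DERIV_cmult[OF DERIV_mult[OF DERIV_powr[OF g1 _ ca] DERIV_powr[OF g2 _ cb]]]])
           (use s t te in auto)
    qed
    also have "(\<Sum>k<n. W a b x * (h k - h (Suc k))) = W a b x * (h 0 - h n)"
      by (simp only: sum_distrib_left[symmetric] sum_lessThan_telescope')
    also have "h 0 - h n = 1" unfolding h_def using pc0 pcn by simp
    finally show ?thesis by simp
  qed
  have q0: "q \<noteq> 0"
  proof
    assume "q = 0"
    then have "\<forall>x\<in>{-1<..<1}. rho x = 0" using rho_eq by simp
    then show False using der no_zero_antideriv by blast
  qed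
  have "poly q x * W a b x = poly 1 x * rho x" if "x \<in> {-1<..<1}" for x
    using rho_eq[OF that] by simp
  then show ?thesis unfolding has_qr_antiderivative_def quasi_rational_on_def
    using der q0 by blast
qed



lemma Zminus_iff: "x \<in> Zminus \<longleftrightarrow> x \<in> \<int> \<and> x < 0"
proof
  assume "x \<in> Zminus"
  then obtain n :: nat where "n \<ge> 1" "x = - real n" unfolding Zminus_def by auto
  then show "x \<in> \<int> \<and> x < 0" by auto
next
  assume "x \<in> \<int> \<and> x < 0"
  then obtain m :: int where m: "x = of_int m" "m < 0" by (auto elim: Ints_cases)
  show "x \<in> Zminus" unfolding Zminus_def
    by (intro CollectI exI[of _ "nat (-m)"]) (use m in auto)
qed

lemma Nats_iff: "(x::real) \<in> \<nat> \<longleftrightarrow> x \<in> \<int> \<and> 0 \<le> x"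
proof
  assume "x \<in> \<nat>" then show "x \<in> \<int> \<and> 0 \<le> x" by (auto elim: Nats_cases)
next
  assume "x \<in> \<int> \<and> 0 \<le> x"
  then obtain m :: int where m: "x = of_int m" "m \<ge> 0" by (auto elim: Ints_cases)
  then have "x = of_nat (nat m)" by simp
  then show "x \<in> \<nat>" by simp
qed

lemma coprime_no_common_root:
  fixes p q :: "real poly"
  assumes "coprime p q"
  shows "\<not> (poly p c = 0 \<and> poly q c = 0)"
proof
  assume "poly p c = 0 \<and> poly q c = 0"
  then have "[:-c,1:] dvd p" "[:-c,1:] dvd q" by (auto simp: poly_eq_0_iff_dvd)
  then have "is_unit [:-c,1:]" using assms coprime_common_divisor by blast
  then show False by (simp add: is_unit_iff_degree)
qed

lemma refl_ne0: "(p::real poly) \<noteq> 0 \<Longrightarrow> p \<circ>\<^sub>p [:0,-1:] \<noteq> 0"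
  using pcompose_eq_0 by fastforce

lemma EQ_at_m1:
  assumes E: "EQ a b p q = 0" and p0: "p \<noteq> 0" and cp: "coprime p q" and bN: "b \<notin> \<nat>"
  shows "poly p (-1) \<noteq> 0 \<and> poly q (-1) = 0"
proof -
  have E': "EQ b a (p \<circ>\<^sub>p [:0,-1:]) (- (q \<circ>\<^sub>p [:0,-1:])) = 0" using EQ_reflect[OF E] .
  have "\<not> (poly p (-1) = 0 \<and> poly q (-1) = 0)" using coprime_no_common_root[OF cp] .
  then have "\<not> (poly (p \<circ>\<^sub>p [:0,-1:]) 1 = 0 \<and> poly (- (q \<circ>\<^sub>p [:0,-1:])) 1 = 0)"
    by (simp add: poly_pcompose)
  from EQ_at_1[OF E' refl_ne0[OF p0] this bN]
  show ?thesis by (simp add: poly_pcompose)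
qed

lemma qr_coprime:
  assumes "has_qr_antiderivative {-1<..<1} (W a b)"
  obtains p q where "EQ a b p q = 0" "p \<noteq> 0" "q \<noteq> 0" "coprime p q"
  using qr_EQ[OF assms] EQ_coprime by metis

lemma onlyif_bZ:
  assumes qr: "has_qr_antiderivative {-1<..<1} (W a b)" and bZ: "b \<in> Zminus"
  shows "a + b + 1 \<in> Zminus \<and> a \<in> \<int> \<and> b \<in> \<int> \<and> a * b \<le> 0"
proof -
  obtain p q where E: "EQ a b p q = 0" "p \<noteq> 0" "q \<noteq> 0" "coprime p q" using qr_coprime[OF qr] .
  obtain l :: nat where l: "l \<ge> 1" "b = - real l" using bZ unfolding Zminus_def by auto
  have "b \<notin> \<nat>" using l by (auto elim: Nats_cases)
  then have "poly p (-1) \<noteq> 0" using EQ_at_m1[OF E(1,2,4)] by blast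
  from EQ_residue[OF E(1) this l(2) l(1)] obtain k where k: "a = real k" "k + 2 \<le> l" by blast
  have "a + b + 1 \<in> Zminus" unfolding Zminus_iff using k l by auto
  moreover have "a * b \<le> 0" using k l by (simp add: mult_nonneg_nonpos)
  ultimately show ?thesis using k l by auto
qed

lemma onlyif_gen:
  assumes qr: "has_qr_antiderivative {-1<..<1} (W a b)" and aN: "a \<notin> \<nat>" and bN: "b \<notin> \<nat>"
  shows "a + b + 1 \<in> Zminus"
proof -
  obtain p q where E: "EQ a b p q = 0" "p \<noteq> 0" "q \<noteq> 0" "coprime p q" using qr_coprime[OF qr] .
  have h1: "poly p 1 \<noteq> 0 \<and> poly q 1 = 0"
    using EQ_at_1[OF E(1,2) coprime_no_common_root[OF E(4)] aN] .
  have h2: "poly p (-1) \<noteq> 0 \<and> poly q (-1) = 0" using EQ_at_m1[OF E(1,2,4) bN] .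
  have dp: "degree p = 0" using EQ_p_const[OF E(1,2,4)] h1 h2 by blast
  then have pc: "p = [:coeff p 0:]" by (metis degree_0_id)
  have c0: "coeff p 0 \<noteq> 0" using pc E(2) by (metis pCons_0_0)
  have "[:-1,1:] dvd q" using h1 poly_eq_0_iff_dvd[of q 1] by simp
  then obtain r where r: "q = [:-1,1:] * r" by (auto elim: dvdE)
  have "poly r (-1) = 0" using h2 r by simp
  then have "[:1,1:] dvd r" using poly_eq_0_iff_dvd[of r "-1"] by simp
  then obtain s where s: "r = [:1,1:] * s" by (auto elim: dvdE)
  have "s \<noteq> 0" using E(3) r s by auto
  then have d1: "degree ([:1,1::real:] * s) = degree s + 1" by (subst degree_mult_eq) auto
  have "[:1,1::real:] * s \<noteq> 0" using \<open>s \<noteq> 0\<close> by (simp only: mult_eq_0_iff) simp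
  then have "degree ([:-1,1::real:] * ([:1,1:] * s)) = 1 + degree ([:1,1::real:] * s)"
    by (subst degree_mult_eq) auto
  then have dq: "degree q = degree s + 2" using r s d1 by simp
  have "EQ a b [:coeff p 0:] q = 0" using E(1) pc by metis
  from EQ_const_p[OF this c0] dq have "a + b = - real (degree q)" by simp
  then show ?thesis unfolding Zminus_iff using dq by auto
qed



theorem mainTheorem12:
  fixes a b :: real
  defines "condA \<equiv> (a \<in> \<nat> \<and> b \<notin> Zminus) \<or> (b \<in> \<nat> \<and> a \<notin> Zminus)"
      and "condC \<equiv> a + b + 1 \<in> Zminus \<and> a \<notin> Zminus \<and> b \<notin> Zminus"
      and "condH \<equiv> a + b + 1 \<in> Zminus \<and> a \<in> \<int> \<and> b \<in> \<int> \<and> a * b \<le> 0"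
  shows "(has_qr_antiderivative {-1<..<1} (W a b) \<longleftrightarrow> condA \<or> condC \<or> condH)
         \<and> \<not> (condA \<and> condC) \<and> \<not> (condA \<and> condH) \<and> \<not> (condC \<and> condH)"
proof -
  have AC: "\<not> (x \<in> \<nat> \<and> y \<notin> Zminus \<and> x + y + 1 \<in> Zminus)" for x y :: real
  proof
    assume h: "x \<in> \<nat> \<and> y \<notin> Zminus \<and> x + y + 1 \<in> Zminus"
    then have "x \<in> \<int>" "0 \<le> x" "x + y + 1 \<in> \<int>" "x + y + 1 < 0" unfolding Nats_iff Zminus_iff by auto
    then have "y \<in> \<int>" using Ints_diff[of "x + y + 1" "x + 1"] by (simp add: algebra_simps)
    moreover have "y < 0" using \<open>0 \<le> x\<close> \<open>x + y + 1 < 0\<close> by linarith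
    ultimately show False using h unfolding Zminus_iff by auto
  qed
  have excl: "\<not> (condA \<and> condC) \<and> \<not> (condA \<and> condH) \<and> \<not> (condC \<and> condH)"
  proof (intro conjI notI)
    assume "condA \<and> condC" then show False using AC[of a b] AC[of b a] unfolding condA_def condC_def
      by (auto simp: add.commute add.left_commute)
  next
    assume "condA \<and> condH" then show False using AC[of a b] AC[of b a] unfolding condA_def condH_def
      by (auto simp: add.commute add.left_commute)
  next
    assume "condC \<and> condH" then show False unfolding condC_def condH_def Zminus_iff by auto
  qed
  have fwd: "condA \<or> condC \<or> condH" if qr: "has_qr_antiderivative {-1<..<1} (W a b)"
  proof -
    have qr': "has_qr_antiderivative {-1<..<1} (W b a)" using qr_symm[OF qr] .
    show ?thesis
    proof (cases "b \<in> Zminus")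
      case True then show ?thesis using onlyif_bZ[OF qr] unfolding condH_def by blast
    next
      case bZ: False
      show ?thesis
      proof (cases "a \<in> Zminus")
        case True then have "b + a + 1 \<in> Zminus \<and> b \<in> \<int> \<and> a \<in> \<int> \<and> b * a \<le> 0"
          using onlyif_bZ[OF qr'] by blast
        then show ?thesis unfolding condH_def by (simp add: add.commute add.left_commute mult.commute)
      next
        case aZ: False
        show ?thesis
        proof (cases "a \<in> \<nat> \<or> b \<in> \<nat>")
          case True then show ?thesis using aZ bZ unfolding condA_def by blast
        next
          case False
          then have "a + b + 1 \<in> Zminus" using onlyif_gen[OF qr] by blast
          then show ?thesis using aZ bZ unfolding condC_def by blast
        qed
      qed
    qed
  qed
  have CH: "has_qr_antiderivative {-1<..<1} (W a b)" if "condC \<or> condH"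
  proof -
    have "a + b + 1 \<in> Zminus" using that unfolding condC_def condH_def by blast
    then obtain n :: nat where n: "n \<ge> 1" "a + b + 1 = - real n" unfolding Zminus_def by auto
    have "\<forall>k<n. b + real k + 1 \<noteq> 0"
    proof (intro allI impI notI)
      fix k assume k: "k < n" "b + real k + 1 = 0"
      then have bm: "b = - real (Suc k)" by simp
      then have "b \<in> Zminus" unfolding Zminus_iff by simp
      then have hH: "condH" using that unfolding condC_def by blast
      have "a = real k - real n" using n(2) bm by simp
      then have "a < 0" using k by simp
      moreover have "b < 0" using bm by simp
      ultimately have "a * b > 0" by (simp add: mult_neg_neg)
      then show False using hH unfolding condH_def by simp
    qed
    then show ?thesis using caseCH[OF n(2) n(1)] by blast
  qed
  have A: "has_qr_antiderivative {-1<..<1} (W a b)" if condA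
  proof -
    have "(a \<in> \<nat> \<and> b \<notin> Zminus) \<or> (b \<in> \<nat> \<and> a \<notin> Zminus)" using that unfolding condA_def .
    then show ?thesis
    proof
      assume "a \<in> \<nat> \<and> b \<notin> Zminus"
      then obtain n where "a = real n" "b \<notin> Zminus" by (auto elim: Nats_cases)
      then show ?thesis using caseA by blast
    next
      assume "b \<in> \<nat> \<and> a \<notin> Zminus"
      then obtain n where "b = real n" "a \<notin> Zminus" by (auto elim: Nats_cases)
      then have "has_qr_antiderivative {-1<..<1} (W b a)" using caseA by blast
      then show ?thesis by (rule qr_symm)
    qed
  qed
  show ?thesis using fwd CH A excl by blast
qed


end
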